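(* Let $\{T_n\}_{n\in\mathbb{Z}}$ and $\{S_n\}_{n\in\mathbb{Z}}$ be discrete linear evolution processes in a Banach space $X$ which admit nonuniform exponential dichotomies with projections $\{Q^{\mathcal{T}}_n\}$ and $\{Q^{\mathcal{S}}_n\}$, exponents $\alpha_{\mathcal{T}}$ and $\alpha_{\mathcal{S}}$ respectively, and the same bound $K(n)\le De^{\nu|n|}$. If $\nu<\min\{\alpha_{\mathcal{T}},\alpha_{\mathcal{S}}\}$ and $$\sup_{n\in\mathbb{Z}}\{K(n+1)\|T_n-S_n\|_{\mathcal{L}(X)}\}\le\epsilon,$$ then $$\sup_{n\in\mathbb{Z}}\{K(n)^{-1}\|Q^{\mathcal{T}}_n-Q^{\mathcal{S}}_n\|_{\mathcal{L}(X)}\}\le\frac{e^{-\alpha_{\mathcal{S}}}+e^{-\alpha_{\mathcal{T}}}}{1-e^{-(\alpha_{\mathcal{S}}+\alpha_{\mathcal{T}})}}\,\epsilon.$$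
   Context: A discrete (linear) evolution process in a Banach space $X$ is a family $\{S_{n,m}: n,m\in\mathbb{Z},\ n\ge m\}\subset\mathcal{L}(X)$ with $S_{n,n}=Id_X$ and $S_{n,m}S_{m,k}=S_{n,k}$ for $n\ge m\ge k$; equivalently it is given by one-step operators $S_n:=S_{n+1,n}$ via $S_{n,m}=S_{n-1}\cdots S_m$ ($n>m$). It admits a nonuniform exponential dichotomy if there is a family of bounded projections $\{Q_n\}_{n\in\mathbb{Z}}\subset\mathcal{L}(X)$ such that: (i) $Q_nS_{n,m}=S_{n,m}Q_m$ for $n\ge m$; (ii) for $n\ge m$, $S_{n,m}$ restricted to $R(Q_m)$ is an isomorphism onto $R(Q_n)$, and $S_{m,n}$ denotes its inverse; (iii) there are a function $K:\mathbb{Z}\to[1,\infty)$ (the bound) with $K(n)\le De^{\nu|n|}$ for some $D\ge1$, $\nu>0$, and $\alpha>0$ (the exponent) with $\|S_{n,m}(Id_X-Q_m)\|\le K(m)e^{-\alpha(n-m)}$ for $n\ge m$ and $\|S_{n,m}Q_m\|\le K(m)e^{\alpha(n-m)}$ for $n\le m$. *)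

theory Defs
  imports "HOL-Analysis.Analysis"
begin

text \<open>Discrete evolution process generated by one-step operators T n = S_{n+1,n}.
  evol_aux T m k = T (m+k-1) \<circ> ... \<circ> T m, i.e. S_{m+k,m}.\<close>
primrec evol_aux :: "(int \<Rightarrow> ('a::real_normed_vector \<Rightarrow>\<^sub>L 'a)) \<Rightarrow> int \<Rightarrow> nat \<Rightarrow> ('a \<Rightarrow>\<^sub>L 'a)" where
  "evol_aux T m 0 = id_blinfun"
| "evol_aux T m (Suc k) = T (m + int k) o\<^sub>L evol_aux T m k"

text \<open>evol T n m = S_{n,m} for n \<ge> m (identity when n \<le> m).\<close>
definition evol :: "(int \<Rightarrow> ('a::real_normed_vector \<Rightarrow>\<^sub>L 'a)) \<Rightarrow> int \<Rightarrow> int \<Rightarrow> ('a \<Rightarrow>\<^sub>L 'a)" where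
  "evol T n m = evol_aux T m (nat (n - m))"

text \<open>The growth condition K n \<le> D e^{\<nu>|n|} is required with
  the given D \<ge> 1, \<nu> > 0. For n \<le> m, the backward operator S_{n,m} Q_m maps x to the
  unique y \<in> R(Q_n) with S_{m,n} y = Q_m x; its operator-norm bound is stated pointwise.\<close>
definition nonuniform_dichotomy ::
  "(int \<Rightarrow> ('a::banach \<Rightarrow>\<^sub>L 'a)) \<Rightarrow> (int \<Rightarrow> ('a \<Rightarrow>\<^sub>L 'a)) \<Rightarrow> (int \<Rightarrow> real) \<Rightarrow> real \<Rightarrow> real \<Rightarrow> real \<Rightarrow> bool" where
  "nonuniform_dichotomy T Q K \<alpha> D \<nu> \<longleftrightarrow>
     (\<forall>n. Q n o\<^sub>L Q n = Q n) \<and>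
     (\<forall>n m. m \<le> n \<longrightarrow> Q n o\<^sub>L evol T n m = evol T n m o\<^sub>L Q m) \<and>
     (\<forall>n m. m \<le> n \<longrightarrow> bij_betw (blinfun_apply (evol T n m)) (range (blinfun_apply (Q m))) (range (blinfun_apply (Q n)))) \<and>
     D \<ge> 1 \<and> \<nu> > 0 \<and> \<alpha> > 0 \<and>
     (\<forall>n. 1 \<le> K n \<and> K n \<le> D * exp (\<nu> * \<bar>real_of_int n\<bar>)) \<and>
     (\<forall>n m. m \<le> n \<longrightarrow> norm (evol T n m o\<^sub>L (id_blinfun - Q m)) \<le> K m * exp (- \<alpha> * real_of_int (n - m))) \<and>
     (\<forall>n m x y. n \<le> m \<longrightarrow> y \<in> range (blinfun_apply (Q n)) \<longrightarrow> evol T m n y = Q m x \<longrightarrow>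
        norm y \<le> K m * exp (\<alpha> * real_of_int (n - m)) * norm x)"

end

theory Submission
  imports Defs
begin

lemma evol_aux_add: "evol_aux T m (a + b) x = evol_aux T (m + int a) b (evol_aux T m a x)"
  by (induction b) (simp_all add: add.assoc)

lemma evol_comp: assumes "k \<le> m" "m \<le> n"
  shows "evol T n k x = evol T n m (evol T m k x)"
proof -
  have e: "nat (n - k) = nat (m - k) + nat (n - m)" using assms by auto
  have b: "k + int (nat (m - k)) = m" using assms by auto
  show ?thesis unfolding evol_def e evol_aux_add b ..
qed

lemma evol_same[simp]: "evol T n n = id_blinfun" by (simp add: evol_def)
lemma evol_step[simp]: "evol T (k+1) k = T k" 
  by (simp add: evol_def) (rule blinfun_eqI, simp)

lemma evol_left: "k < n \<Longrightarrow> evol T n k x = evol T n (k+1) (T k x)"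
  using evol_comp[of k "k+1" n T x] by simp
lemma evol_right: "n \<le> k \<Longrightarrow> evol T (k+1) n x = T k (evol T k n x)"
  using evol_comp[of n k "k+1" T x] by simp

lemma tele:
  fixes u :: "nat \<Rightarrow> 'a::real_normed_vector"
  assumes d: "\<And>i. norm (u (Suc i) - u i) \<le> c * r^i" and t: "\<And>N. norm (u N) \<le> C * q^N"
    and r: "0 \<le> r" "r < 1" and q: "0 \<le> q" "q < 1" and c: "0 \<le> c"
  shows "norm (u 0) \<le> c / (1 - r)"
proof -
  have le: "norm (u 0) \<le> c / (1 - r) + C * q^N" for N
  proof -
    have "u 0 = u N - (\<Sum>i<N. u (Suc i) - u i)" by (simp add: sum_lessThan_telescope)
    hence "norm (u 0) \<le> norm (u N) + (\<Sum>i<N. norm (u (Suc i) - u i))"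
      by (metis norm_triangle_ineq4 norm_sum order_trans add_left_mono)
    also have "\<dots> \<le> C * q^N + (\<Sum>i<N. c * r^i)"
      by (intro add_mono t sum_mono d)
    also have "(\<Sum>i<N. c * r^i) = c * (1 - r^N) / (1 - r)"
      using r by (simp add: sum_distrib_left[symmetric] sum_gp_strict)
    also have "\<dots> \<le> c / (1 - r)" using r c
      by (intro divide_right_mono) (auto simp: mult_left_le)
    finally show ?thesis by simp
  qed
  have "(\<lambda>N. c / (1 - r) + C * q^N) \<longlonglongrightarrow> c / (1 - r) + C * 0"
    by (intro tendsto_intros LIMSEQ_power_zero) (use q in auto)
  hence "(\<lambda>N. c / (1 - r) + C * q^N) \<longlonglongrightarrow> c / (1 - r)" by simp
  thus ?thesis by (rule LIMSEQ_le_const) (use le in auto)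
qed

lemma dich_facts:
  assumes "nonuniform_dichotomy T Q K \<alpha> D \<nu>"
  shows "\<And>k v. Q k (Q k v) = Q k v"
    and "\<And>n m v. m \<le> n \<Longrightarrow> Q n (evol T n m v) = evol T n m (Q m v)"
    and "\<And>n m. m \<le> n \<Longrightarrow> bij_betw (blinfun_apply (evol T n m)) (range (blinfun_apply (Q m))) (range (blinfun_apply (Q n)))"
    and "D \<ge> 1" "\<nu> > 0" "\<alpha> > 0"
    and "\<And>n. 1 \<le> K n" "\<And>n. K n \<le> D * exp (\<nu> * \<bar>real_of_int n\<bar>)"
    and "\<And>n m v. m \<le> n \<Longrightarrow> norm (evol T n m (v - Q m v)) \<le> K m * exp (- \<alpha> * real_of_int (n - m)) * norm v"
    and "\<And>n m x y. n \<le> m \<Longrightarrow> Q n y = y \<Longrightarrow> evol T m n y = Q m x \<Longrightarrow>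
        norm y \<le> K m * exp (\<alpha> * real_of_int (n - m)) * norm x"
proof -
  note A = assms[unfolded nonuniform_dichotomy_def]
  show "Q k (Q k v) = Q k v" for k v using A by (metis blinfun_apply_blinfun_compose)
  show "Q n (evol T n m v) = evol T n m (Q m v)" if "m \<le> n" for n m v
    using A that by (metis blinfun_apply_blinfun_compose)
  show "bij_betw (blinfun_apply (evol T n m)) (range (blinfun_apply (Q m))) (range (blinfun_apply (Q n)))" if "m \<le> n" for n m
    using A that by blast
  show "D \<ge> 1" "\<nu> > 0" "\<alpha> > 0" using A by auto
  show "\<And>n. 1 \<le> K n" "\<And>n. K n \<le> D * exp (\<nu> * \<bar>real_of_int n\<bar>)" using A by auto
  show "norm (evol T n m (v - Q m v)) \<le> K m * exp (- \<alpha> * real_of_int (n - m)) * norm v" if "m \<le> n" for n m v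
  proof -
    have "evol T n m (v - Q m v) = (evol T n m o\<^sub>L (id_blinfun - Q m)) v"
      by (simp add: blinfun.diff_left)
    also have "norm \<dots> \<le> norm (evol T n m o\<^sub>L (id_blinfun - Q m)) * norm v" by (rule norm_blinfun)
    also have "\<dots> \<le> K m * exp (- \<alpha> * real_of_int (n - m)) * norm v"
      using A that by (intro mult_right_mono) auto
    finally show ?thesis .
  qed
  show "norm y \<le> K m * exp (\<alpha> * real_of_int (n - m)) * norm x"
    if "n \<le> m" "Q n y = y" "evol T m n y = Q m x" for n m x y
  proof -
    have "y \<in> range (blinfun_apply (Q n))" by (metis rangeI that(2))
    thus ?thesis using A that by blast
  qed
qed

lemma exp_geom: "exp (- a * real i) * exp (- b * real (Suc i)) = exp (- b) * exp (- (b + a)) ^ i"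
proof -
  have "exp (- (b + a)) ^ i = exp (real i * (- (b + a)))" by (rule exp_of_nat_mult[symmetric])
  thus ?thesis by (simp add: exp_add[symmetric] algebra_simps)
qed

lemma exp_geom2: "exp (\<nu> * real N) * exp (- a * real N) * exp (- b * real N) = exp (\<nu> - a - b) ^ N"
proof -
  have "exp (\<nu> - a - b) ^ N = exp (real N * (\<nu> - a - b))" by (rule exp_of_nat_mult[symmetric])
  thus ?thesis by (simp add: exp_add[symmetric] algebra_simps)
qed

lemma partA:
  assumes dT: "nonuniform_dichotomy T QT K \<alpha>T D \<nu>" and dS: "nonuniform_dichotomy S QS K \<alpha>S D \<nu>"
    and nu: "\<nu> < \<alpha>T + \<alpha>S" and eps: "\<forall>n. K (n + 1) * norm (T n - S n) \<le> \<epsilon>"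
  shows "norm (QS n x - QT n (QS n x)) \<le> \<epsilon> * K n * norm x * exp (- \<alpha>S) / (1 - exp (- (\<alpha>S + \<alpha>T)))"
proof -
  note T = dich_facts[OF dT] and S = dich_facts[OF dS]
  have epos: "\<epsilon> \<ge> 0" using eps T(7)[of 1] by (metis mult_nonneg_nonneg norm_ge_zero order_trans zero_le_one add_0)
  define y where "y k = inv_into (range (blinfun_apply (QS k))) (evol S n k) (QS n x)" for k
  have yr: "QS k (y k) = y k" and ye: "evol S n k (y k) = QS n x" if "k \<le> n" for k
  proof -
    have b: "evol S n k ` range (blinfun_apply (QS k)) = range (blinfun_apply (QS n))"
      using S(3)[OF that] by (simp add: bij_betw_def)
    have "QS n x \<in> evol S n k ` range (blinfun_apply (QS k))" unfolding b by simp
    then have "y k \<in> range (blinfun_apply (QS k))" "evol S n k (y k) = QS n x"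
      unfolding y_def by (auto intro: inv_into_into f_inv_into_f)
    thus "QS k (y k) = y k" "evol S n k (y k) = QS n x" using S(1) by auto
  qed
  have yb: "norm (y k) \<le> K n * exp (\<alpha>S * real_of_int (k - n)) * norm x" if "k \<le> n" for k
    using S(10)[OF that yr[OF that] ye[OF that]] .
  have yn: "y n = QS n x" using ye[of n] by simp
  have ys: "y (k+1) = S k (y k)" if "k < n" for k
  proof -
    have inj: "inj_on (evol S n (k+1)) (range (blinfun_apply (QS (k+1))))"
      using S(3)[of "k+1" n] that by (simp add: bij_betw_def)
    have "QS (k+1) (S k (y k)) = S k (y k)"
      using S(2)[of k "k+1" "y k"] yr[of k] that by simp
    hence m: "S k (y k) \<in> range (blinfun_apply (QS (k+1)))" by (metis rangeI)
    have m2: "y (k+1) \<in> range (blinfun_apply (QS (k+1)))" using yr[of "k+1"] that by (metis rangeI zless_imp_add1_zle)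
    have "evol S n (k+1) (S k (y k)) = evol S n (k+1) (y (k+1))"
      using ye[of k] ye[of "k+1"] that evol_left[OF that, of S "y k"] by simp
    thus ?thesis using inj_onD[OF inj _ m2 m] by simp
  qed
  define u where "u i = evol T n (n - int i) (y (n - int i) - QT (n - int i) (y (n - int i)))" for i
  define r where "r = exp (- (\<alpha>S + \<alpha>T))"
  define q where "q = exp (\<nu> - \<alpha>T - \<alpha>S)"
  have "norm (u 0) \<le> (\<epsilon> * K n * norm x * exp (- \<alpha>S)) / (1 - r)"
  proof (rule tele)
    fix i
    define k where "k = n - int i - 1"
    have k1: "n - int (Suc i) = k" "n - int i = k + 1" "k < n" unfolding k_def by auto
    define w where "w = T k (y k) - S k (y k)"
    have "u (Suc i) - u i = evol T n (k+1) (w - QT (k+1) w)"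
      unfolding u_def k1 w_def
      using evol_left[OF k1(3), of T] ys[OF k1(3)] T(2)[of k "k+1"]
      by (simp add: blinfun.diff_right)
    also have "norm \<dots> \<le> K (k+1) * exp (- \<alpha>T * real_of_int (n - (k+1))) * norm w"
      using T(9)[of "k+1" n w] k1 by simp
    also have "norm w \<le> norm (T k - S k) * norm (y k)"
      unfolding w_def by (metis blinfun.diff_left norm_blinfun)
    also have "\<dots> \<le> norm (T k - S k) * (K n * exp (\<alpha>S * real_of_int (k - n)) * norm x)"
      using yb[of k] k1 by (intro mult_left_mono) auto
    finally have "norm (u (Suc i) - u i) \<le> (K (k+1) * norm (T k - S k)) * K n * norm x * 
       (exp (- \<alpha>T * real_of_int (n - (k+1))) * exp (\<alpha>S * real_of_int (k - n)))"
      using T(7)[of "k+1"] by (simp add: mult_left_mono algebra_simps)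
    also have "\<dots> \<le> \<epsilon> * K n * norm x * (exp (- \<alpha>T * real_of_int (n - (k+1))) * exp (\<alpha>S * real_of_int (k - n)))"
      using eps T(7)[of n] by (intro mult_right_mono) auto
    also have "exp (- \<alpha>T * real_of_int (n - (k+1))) * exp (\<alpha>S * real_of_int (k - n)) = exp (- \<alpha>S) * r ^ i"
      using exp_geom[of \<alpha>T i \<alpha>S] unfolding r_def k_def by (simp add: algebra_simps)
    finally show "norm (u (Suc i) - u i) \<le> \<epsilon> * K n * norm x * exp (- \<alpha>S) * r ^ i" by simp
  next
    fix N
    define k where "k = n - int N"
    have "norm (u N) \<le> K k * exp (- \<alpha>T * real_of_int (n - k)) * norm (y k)"
      unfolding u_def k_def[symmetric] using T(9)[of k n] k_def by simp
    also have "\<dots> \<le> (D * exp (\<nu> * \<bar>real_of_int n\<bar>) * exp (\<nu> * real N)) * exp (- \<alpha>T * real N) * (K n * exp (- \<alpha>S * real N) * norm x)"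
    proof (intro mult_mono)
      have "\<bar>real_of_int k\<bar> \<le> \<bar>real_of_int n\<bar> + real N" unfolding k_def by auto
      hence "\<nu> * \<bar>real_of_int k\<bar> \<le> \<nu> * (\<bar>real_of_int n\<bar> + real N)"
        using T(5) by (intro mult_left_mono) auto
      hence "exp (\<nu> * \<bar>real_of_int k\<bar>) \<le> exp (\<nu> * \<bar>real_of_int n\<bar>) * exp (\<nu> * real N)"
        by (simp add: exp_add[symmetric] algebra_simps)
      thus "K k \<le> D * exp (\<nu> * \<bar>real_of_int n\<bar>) * exp (\<nu> * real N)"
        using T(8)[of k] T(4) by (smt (verit) mult_left_mono mult.assoc)
      show "norm (y k) \<le> K n * exp (- \<alpha>S * real N) * norm x" using yb[of k] unfolding k_def by simp
    qed (use T(4,7) k_def in auto)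
    also have "\<dots> = (D * exp (\<nu> * \<bar>real_of_int n\<bar>) * K n * norm x) * (exp (\<nu> * real N) * exp (- \<alpha>T * real N) * exp (- \<alpha>S * real N))"
      by (simp add: algebra_simps)
    also have "\<dots> = (D * exp (\<nu> * \<bar>real_of_int n\<bar>) * K n * norm x) * q ^ N"
      unfolding q_def exp_geom2 ..
    finally show "norm (u N) \<le> (D * exp (\<nu> * \<bar>real_of_int n\<bar>) * K n * norm x) * q ^ N" .
  next
    show "0 \<le> r" "r < 1" "0 \<le> q" "q < 1" unfolding r_def q_def using T(6) S(6) nu by auto
    show "0 \<le> \<epsilon> * K n * norm x * exp (- \<alpha>S)" using epos T(7)[of n] by simp
  qed
  moreover have "u 0 = QS n x - QT n (QS n x)" unfolding u_def by (simp add: yn)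
  ultimately show ?thesis unfolding r_def by simp
qed


lemma partB:
  assumes dT: "nonuniform_dichotomy T QT K \<alpha>T D \<nu>" and dS: "nonuniform_dichotomy S QS K \<alpha>S D \<nu>"
    and nu: "\<nu> < \<alpha>T + \<alpha>S" and eps: "\<forall>n. K (n + 1) * norm (T n - S n) \<le> \<epsilon>"
  shows "norm (QT n (x - QS n x)) \<le> \<epsilon> * K n * norm x * exp (- \<alpha>T) / (1 - exp (- (\<alpha>S + \<alpha>T)))"
proof -
  note T = dich_facts[OF dT] and S = dich_facts[OF dS]
  have epos: "\<epsilon> \<ge> 0" using eps T(7)[of 1] by (metis mult_nonneg_nonneg norm_ge_zero order_trans zero_le_one add_0)
  define z where "z k = evol S k n (x - QS n x)" for k
  define w where "w k = inv_into (range (blinfun_apply (QT n))) (evol T k n) (QT k (z k))" for k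
  have wr: "QT n (w k) = w k" and we: "evol T k n (w k) = QT k (z k)" if "n \<le> k" for k
  proof -
    have b: "evol T k n ` range (blinfun_apply (QT n)) = range (blinfun_apply (QT k))"
      using T(3)[OF that] by (simp add: bij_betw_def)
    have "QT k (z k) \<in> evol T k n ` range (blinfun_apply (QT n))" unfolding b by simp
    then have "w k \<in> range (blinfun_apply (QT n))" "evol T k n (w k) = QT k (z k)"
      unfolding w_def by (auto intro: inv_into_into f_inv_into_f)
    thus "QT n (w k) = w k" "evol T k n (w k) = QT k (z k)" using T(1) by auto
  qed
  have zb: "norm (z k) \<le> K n * exp (- \<alpha>S * real_of_int (k - n)) * norm x" if "n \<le> k" for k
    unfolding z_def using S(9)[OF that] .
  have wn: "w n = QT n (x - QS n x)" using we[of n] by (simp add: z_def)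
  have zs: "z (k+1) = S k (z k)" if "n \<le> k" for k
    unfolding z_def using evol_right[OF that] .
  define u where "u i = w (n + int i)" for i
  define r where "r = exp (- (\<alpha>S + \<alpha>T))"
  define q where "q = exp (\<nu> - \<alpha>T - \<alpha>S)"
  have "norm (u 0) \<le> (\<epsilon> * K n * norm x * exp (- \<alpha>T)) / (1 - r)"
  proof (rule tele)
    fix i
    define k where "k = n + int i"
    have k1: "n + int (Suc i) = k + 1" "n + int i = k" "n \<le> k" unfolding k_def by auto
    define v where "v = w (k+1) - w k"
    have vr: "QT n v = v" unfolding v_def using wr[of k] wr[of "k+1"] k1 by (simp add: blinfun.diff_right)
    have "evol T (k+1) n v = QT (k+1) (S k (z k) - T k (z k))"
      unfolding v_def using we[of k] we[of "k+1"] k1 evol_right[OF k1(3), of T "w k"] zs[OF k1(3)]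
        T(2)[of k "k+1" "z k"]
      by (simp add: blinfun.diff_right)
    hence "norm v \<le> K (k+1) * exp (\<alpha>T * real_of_int (n - (k+1))) * norm (S k (z k) - T k (z k))"
      using T(10)[OF _ vr, of "k+1"] k1 by simp
    also have "norm (S k (z k) - T k (z k)) \<le> norm (T k - S k) * norm (z k)"
      by (metis blinfun.diff_left norm_blinfun norm_minus_commute)
    also have "\<dots> \<le> norm (T k - S k) * (K n * exp (- \<alpha>S * real_of_int (k - n)) * norm x)"
      using zb[of k] k1 by (intro mult_left_mono) auto
    finally have "norm (u (Suc i) - u i) \<le> (K (k+1) * norm (T k - S k)) * K n * norm x * 
       (exp (\<alpha>T * real_of_int (n - (k+1))) * exp (- \<alpha>S * real_of_int (k - n)))"
      using T(7)[of "k+1"] unfolding u_def v_def k1 by (simp add: mult_left_mono algebra_simps)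
    also have "\<dots> \<le> \<epsilon> * K n * norm x * (exp (\<alpha>T * real_of_int (n - (k+1))) * exp (- \<alpha>S * real_of_int (k - n)))"
      using eps T(7)[of n] by (intro mult_right_mono) auto
    also have "exp (\<alpha>T * real_of_int (n - (k+1))) * exp (- \<alpha>S * real_of_int (k - n)) = exp (- \<alpha>T) * r ^ i"
      using exp_geom[of \<alpha>S i \<alpha>T] unfolding r_def k_def by (simp add: algebra_simps)
    finally show "norm (u (Suc i) - u i) \<le> \<epsilon> * K n * norm x * exp (- \<alpha>T) * r ^ i" by simp
  next
    fix N
    define k where "k = n + int N"
    have "norm (u N) \<le> K k * exp (\<alpha>T * real_of_int (n - k)) * norm (z k)"
      unfolding u_def k_def[symmetric] using T(10)[of n k "w k" "z k"] wr[of k] we[of k] k_def by simp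
    also have "\<dots> \<le> (D * exp (\<nu> * \<bar>real_of_int n\<bar>) * exp (\<nu> * real N)) * exp (- \<alpha>T * real N) * (K n * exp (- \<alpha>S * real N) * norm x)"
    proof (intro mult_mono)
      have "\<bar>real_of_int k\<bar> \<le> \<bar>real_of_int n\<bar> + real N" unfolding k_def by auto
      hence "\<nu> * \<bar>real_of_int k\<bar> \<le> \<nu> * (\<bar>real_of_int n\<bar> + real N)"
        using T(5) by (intro mult_left_mono) auto
      hence "exp (\<nu> * \<bar>real_of_int k\<bar>) \<le> exp (\<nu> * \<bar>real_of_int n\<bar>) * exp (\<nu> * real N)"
        by (simp add: exp_add[symmetric] algebra_simps)
      thus "K k \<le> D * exp (\<nu> * \<bar>real_of_int n\<bar>) * exp (\<nu> * real N)"
        using T(8)[of k] T(4) by (smt (verit) mult_left_mono mult.assoc)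
      show "norm (z k) \<le> K n * exp (- \<alpha>S * real N) * norm x" using zb[of k] unfolding k_def by simp
    qed (use T(4,7) k_def in auto)
    also have "\<dots> = (D * exp (\<nu> * \<bar>real_of_int n\<bar>) * K n * norm x) * (exp (\<nu> * real N) * exp (- \<alpha>T * real N) * exp (- \<alpha>S * real N))"
      by (simp add: algebra_simps)
    also have "\<dots> = (D * exp (\<nu> * \<bar>real_of_int n\<bar>) * K n * norm x) * q ^ N"
      unfolding q_def exp_geom2 ..
    finally show "norm (u N) \<le> (D * exp (\<nu> * \<bar>real_of_int n\<bar>) * K n * norm x) * q ^ N" .
  next
    show "0 \<le> r" "r < 1" "0 \<le> q" "q < 1" unfolding r_def q_def using T(6) S(6) nu by auto
    show "0 \<le> \<epsilon> * K n * norm x * exp (- \<alpha>T)" using epos T(7)[of n] by simp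
  qed
  moreover have "u 0 = QT n (x - QS n x)" unfolding u_def by (simp add: wn)
  ultimately show ?thesis unfolding r_def by simp
qed


theorem mainTheorem2:
  fixes T S QT QS :: "int \<Rightarrow> ('a::banach \<Rightarrow>\<^sub>L 'a)"
    and K :: "int \<Rightarrow> real" and \<alpha>T \<alpha>S D \<nu> \<epsilon> :: real
  assumes "nonuniform_dichotomy T QT K \<alpha>T D \<nu>"
    and "nonuniform_dichotomy S QS K \<alpha>S D \<nu>"
    and "\<nu> < min \<alpha>T \<alpha>S"
    and "\<forall>n. K (n + 1) * norm (T n - S n) \<le> \<epsilon>"
  shows "\<forall>n. inverse (K n) * norm (QT n - QS n)
           \<le> (exp (- \<alpha>S) + exp (- \<alpha>T)) / (1 - exp (- (\<alpha>S + \<alpha>T))) * \<epsilon>"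
proof
  fix n
  note T = dich_facts[OF assms(1)] and S = dich_facts[OF assms(2)]
  have nu: "\<nu> < \<alpha>T + \<alpha>S" using assms(3) S(6) by auto
  define C where "C = (exp (- \<alpha>S) + exp (- \<alpha>T)) / (1 - exp (- (\<alpha>S + \<alpha>T)))"
  have r1: "exp (- (\<alpha>S + \<alpha>T)) < 1" using T(6) S(6) by simp
  have epos: "\<epsilon> \<ge> 0" using assms(4) T(7)[of 1] by (metis mult_nonneg_nonneg norm_ge_zero order_trans zero_le_one add_0)
  have Cpos: "C \<ge> 0" unfolding C_def using r1 by (intro divide_nonneg_pos) auto
  have Kp: "K n > 0" using T(7)[of n] by simp
  have "norm (QT n - QS n) \<le> K n * C * \<epsilon>"
  proof (rule norm_blinfun_bound)
    show "0 \<le> K n * C * \<epsilon>" using Kp Cpos epos by simp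
    fix x
    have "(QT n - QS n) x = QT n (x - QS n x) - (QS n x - QT n (QS n x))"
      by (simp add: blinfun.diff_left blinfun.diff_right)
    hence "norm ((QT n - QS n) x) \<le> norm (QT n (x - QS n x)) + norm (QS n x - QT n (QS n x))"
      by (metis norm_triangle_ineq4)
    also have "\<dots> \<le> \<epsilon> * K n * norm x * exp (- \<alpha>T) / (1 - exp (- (\<alpha>S + \<alpha>T)))
        + \<epsilon> * K n * norm x * exp (- \<alpha>S) / (1 - exp (- (\<alpha>S + \<alpha>T)))"
      by (intro add_mono partA[OF assms(1,2) nu assms(4)] partB[OF assms(1,2) nu assms(4)])
    also have "\<dots> = K n * C * \<epsilon> * norm x"
    proof -
      have g: "\<And>d::real. d \<noteq> 0 \<Longrightarrow> \<epsilon> * K n * norm x * exp (- \<alpha>T) / d + \<epsilon> * K n * norm x * exp (- \<alpha>S) / d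
         = K n * ((exp (- \<alpha>S) + exp (- \<alpha>T)) / d) * \<epsilon> * norm x"
        by (simp add: field_simps)
      show ?thesis unfolding C_def by (rule g) (use r1 in simp)
    qed
    finally show "norm ((QT n - QS n) x) \<le> K n * C * \<epsilon> * norm x" .
  qed
  hence "inverse (K n) * norm (QT n - QS n) \<le> inverse (K n) * (K n * C * \<epsilon>)"
    using Kp by (intro mult_left_mono) auto
  also have "\<dots> = C * \<epsilon>" using Kp by simp
  finally show "inverse (K n) * norm (QT n - QS n) \<le> (exp (- \<alpha>S) + exp (- \<alpha>T)) / (1 - exp (- (\<alpha>S + \<alpha>T))) * \<epsilon>"
    unfolding C_def .
qed

end
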